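(* For all integers $n\ge 1$ and $k\ge 3$, the book graph $B_{n,k}$ is odd prime.
   Context: All graphs are finite and simple. A graph $G$ of order $N$ is odd prime if there is a bijection $\ell:V(G)\to\{1,3,\ldots,2N-1\}$ with $\gcd(\ell(u),\ell(v))=1$ for every edge $uv$. The book graph $B_{n,k}$ consists of $n$ cycles of length $k$ (pages) all sharing one common edge $uv$ and otherwise disjoint: it has vertices $u,v$ and $w_{i,j}$ for $1\le i\le n$, $1\le j\le k-2$, with edges $uv$, $uw_{i,1}$, $w_{i,j}w_{i,j+1}$ ($1\le j\le k-3$) and $w_{i,k-2}v$ for each $i$. It has $(k-2)n+2$ vertices. *)

theory Defs
  imports Main
begin

definition odd_prime_graph :: "'a set \<Rightarrow> 'a set set \<Rightarrow> bool" where
  "odd_prime_graph V E \<longleftrightarrow>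
     (\<exists>l :: 'a \<Rightarrow> nat. bij_betw l V {m. odd m \<and> m \<le> 2 * card V - 1}
        \<and> (\<forall>u v. {u, v} \<in> E \<longrightarrow> coprime (l u) (l v)))"

datatype book_vertex = BU | BV | BW nat nat

definition book_vertices :: "nat \<Rightarrow> nat \<Rightarrow> book_vertex set" where
  "book_vertices n k = {BU, BV} \<union> {BW i j | i j. 1 \<le> i \<and> i \<le> n \<and> 1 \<le> j \<and> j \<le> k - 2}"

definition book_edges :: "nat \<Rightarrow> nat \<Rightarrow> book_vertex set set" where
  "book_edges n k =
     {{BU, BV}}
     \<union> {{BU, BW i 1} | i. 1 \<le> i \<and> i \<le> n}
     \<union> {{BW i j, BW i (j + 1)} | i j. 1 \<le> i \<and> i \<le> n \<and> 1 \<le> j \<and> j \<le> k - 3}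
     \<union> {{BW i (k - 2), BV} | i. 1 \<le> i \<and> i \<le> n}"

end

theory Submission
  imports Defs "HOL-Computational_Algebra.Primes" "HOL.Binomial_Plus"
begin


lemma prime_by_sqrt:
  fixes p :: nat
  assumes "1 < p" "\<forall>d\<in>set [2..<q]. \<not> d dvd p" "p < q * q"
  shows "prime p"
  unfolding prime_nat_iff'
proof (intro conjI ballI)
  show "1 < p" by fact
  fix n assume n: "n \<in> {2..<p}"
  show "\<not> n dvd p"
  proof
    assume "n dvd p"
    then obtain r where r: "p = n * r" by auto
    have "r \<ge> 2" using n r assms(1) by (cases r; cases "r - 1"; auto)
    have rd: "r dvd p" using r by simp
    show False
    proof (cases "n < q")
      case True then show False using assms(2) n \<open>n dvd p\<close> by auto
    next
      case False
      have "r < q"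
      proof (rule ccontr)
        assume "\<not> r < q"
        then have "q * q \<le> n * r" using False by (simp add: mult_le_mono)
        then show False using r assms(3) by simp
      qed
      then show False using assms(2) \<open>r \<ge> 2\<close> rd by auto
    qed
  qed
qed

lemma prime_947: "prime (947::nat)"
proof (rule prime_by_sqrt[where q=31])
  show "\<forall>d\<in>set [2..<31]. \<not> d dvd (947::nat)" by (simp add: upt_rec)
qed simp_all

lemma prime_317: "prime (317::nat)"
proof (rule prime_by_sqrt[where q=18])
  show "\<forall>d\<in>set [2..<18]. \<not> d dvd (317::nat)" by (simp add: upt_rec)
qed simp_all

lemma prime_109: "prime (109::nat)"
proof (rule prime_by_sqrt[where q=11])
  show "\<forall>d\<in>set [2..<11]. \<not> d dvd (109::nat)" by (simp add: upt_rec)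
qed simp_all

lemma prime_37: "prime (37::nat)"
proof (rule prime_by_sqrt[where q=7])
  show "\<forall>d\<in>set [2..<7]. \<not> d dvd (37::nat)" by (simp add: upt_rec)
qed simp_all

lemma prime_13: "prime (13::nat)"
proof (rule prime_by_sqrt[where q=4])
  show "\<forall>d\<in>set [2..<4]. \<not> d dvd (13::nat)" by (simp add: upt_rec)
qed simp_all

lemma small_cases:
  fixes M :: nat
  assumes "1 \<le> M" "M < 947"
  shows "\<exists>p. prime p \<and> M < p \<and> p \<le> 3 * M"
proof -
  have p2: "prime (2::nat)" by (rule two_is_prime_nat)
  have p5: "prime (5::nat)"
  proof (rule prime_by_sqrt[where q=3])
    show "\<forall>d\<in>set [2..<3]. \<not> d dvd (5::nat)" by (simp add: upt_rec)
  qed simp_all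
  have key: "\<And>p. prime p \<Longrightarrow> M < p \<Longrightarrow> p \<le> 3*M \<Longrightarrow> \<exists>p. prime p \<and> M < p \<and> p \<le> 3 * M"
    by blast
  consider "M < 2" | "2 \<le> M \<and> M < 5" | "5 \<le> M \<and> M < 13" | "13 \<le> M \<and> M < 37"
    | "37 \<le> M \<and> M < 109" | "109 \<le> M \<and> M < 317" | "317 \<le> M \<and> M < 947"
    using assms by linarith
  then show ?thesis
  proof cases
    case 1 then show ?thesis using assms by (intro key[OF p2]) linarith+
  next
    case 2 then show ?thesis using assms by (intro key[OF p5]) linarith+
  next
    case 3 then show ?thesis using assms by (intro key[OF prime_13]) linarith+
  next
    case 4 then show ?thesis using assms by (intro key[OF prime_37]) linarith+
  next
    case 5 then show ?thesis using assms by (intro key[OF prime_109]) linarith+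
  next
    case 6 then show ?thesis using assms by (intro key[OF prime_317]) linarith+
  next
    case 7 then show ?thesis using assms by (intro key[OF prime_947]) linarith+
  qed
qed

lemma prod_primes_dvd:
  fixes n :: nat
  assumes "finite A" "\<forall>p\<in>A. prime p \<and> p dvd n"
  shows "\<Prod>A dvd n"
  using assms
proof (induction A rule: finite_induct)
  case empty then show ?case by simp
next
  case (insert p A)
  have pp: "prime p" "p dvd n" using insert.prems by auto
  have "\<not> p dvd \<Prod>A"
  proof
    assume "p dvd \<Prod>A"
    then obtain q where "q \<in> A" "p dvd q" using prime_dvd_prod_iff[OF insert.hyps(1) pp(1)] by auto
    then have "p = q" using insert.prems pp(1) by (metis insert_iff primes_dvd_imp_eq)
    then show False using \<open>q \<in> A\<close> insert.hyps(2) by simp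
  qed
  then have "coprime p (\<Prod>A)" using pp(1) prime_imp_coprime by blast
  moreover have "\<Prod>A dvd n" using insert by auto
  ultimately show ?case using pp(2) insert.hyps by (simp add: divides_mult)
qed

lemma binom_odd_le: "((2*k+1) choose k) \<le> (4::nat)^k"
proof -
  have "(\<Sum>i\<in>{k, k+1}. (2*k+1) choose i) \<le> (\<Sum>i\<le>2*k+1. (2*k+1) choose i)"
    by (rule sum_mono2) auto
  also have "\<dots> = 2^(2*k+1)" by (rule choose_row_sum)
  finally have "2 * ((2*k+1) choose k) \<le> 2 * 4^k"
    using binomial_symmetric[of k "2*k+1"] by (simp add: power_mult)
  then show ?thesis by simp
qed

lemma primorial_le: "\<Prod>{p::nat. prime p \<and> p \<le> n} \<le> 4^n"
proof (induction n rule: less_induct)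
  case (less n)
  show ?case
  proof (cases "n \<le> 2")
    case True
    show ?thesis
    proof (cases "n = 2")
      case True
      have "{p::nat. prime p \<and> p \<le> 2} = {2}"
      proof (intro set_eqI iffI)
        fix x assume "x \<in> {p::nat. prime p \<and> p \<le> 2}"
        then have "prime x" "x \<le> 2" by auto
        moreover have "2 \<le> x" using \<open>prime x\<close> by (rule prime_ge_2_nat)
        ultimately show "x \<in> {2}" by simp
      qed simp
      then show ?thesis using True by simp
    next
      case False
      have "{p::nat. prime p \<and> p \<le> n} = {}"
      proof (intro set_eqI iffI)
        fix x assume "x \<in> {p::nat. prime p \<and> p \<le> n}"
        then have "prime x" "x \<le> n" by auto
        moreover have "2 \<le> x" using \<open>prime x\<close> by (rule prime_ge_2_nat)
        ultimately show "x \<in> {}" using False \<open>n \<le> 2\<close> by simp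
      qed simp
      then show ?thesis by (simp only: prod.empty) simp
    qed
  next
    case False
    show ?thesis
    proof (cases "even n")
      case True
      have "\<not> prime n"
      proof
        assume "prime n"
        then have "odd n" using False by (intro prime_odd_nat) simp_all
        then show False using True by simp
      qed
      have "{p::nat. prime p \<and> p \<le> n} = {p. prime p \<and> p \<le> n - 1}"
      proof (intro set_eqI iffI)
        fix x assume "x \<in> {p::nat. prime p \<and> p \<le> n}"
        then have "prime x" "x \<le> n" by auto
        then have "x \<noteq> n" using \<open>\<not> prime n\<close> by auto
        then show "x \<in> {p. prime p \<and> p \<le> n - 1}" using \<open>prime x\<close> \<open>x \<le> n\<close> by simp
      qed auto
      then have "\<Prod>{p::nat. prime p \<and> p \<le> n} \<le> 4^(n-1)" using less[of "n-1"] False by simp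
      also have "\<dots> \<le> 4^n" by (simp add: power_increasing)
      finally show ?thesis .
    next
      case odd: False
      then obtain k where k: "n = 2*k+1" by (metis oddE)
      have k1: "k \<ge> 1" using k False by simp
      define A where "A = {p::nat. prime p \<and> p \<le> k+1}"
      define B where "B = {p::nat. prime p \<and> k+1 < p \<and> p \<le> n}"
      have finA: "finite A" unfolding A_def by simp
      have finB: "finite B" unfolding B_def by simp
      have eq: "{p::nat. prime p \<and> p \<le> n} = A \<union> B" unfolding A_def B_def using k by auto
      have disj: "A \<inter> B = {}" unfolding A_def B_def by auto
      have "\<Prod>A \<le> 4^(k+1)" unfolding A_def using less[of "k+1"] k k1 by simp
      have "\<Prod>B dvd ((2*k+1) choose k)"
      proof (rule prod_primes_dvd[OF finB], intro ballI conjI)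
        fix p assume p: "p \<in> B"
        then show pp: "prime p" unfolding B_def by simp
        have f: "fact k * fact (k+1) * ((2*k+1) choose k) = (fact (2*k+1) :: nat)"
          using binomial_fact_lemma[of k "2*k+1"] by (simp add: mult_ac)
        have "p \<le> 2*k+1" using p k by (simp add: B_def)
        then have "p dvd (fact (2*k+1) :: nat)" by (subst prime_dvd_fact_iff[OF pp])
        then have "p dvd fact k * fact (k+1) * ((2*k+1) choose k)" using f by simp
        moreover have "\<not> p dvd (fact k :: nat)"
          by (subst prime_dvd_fact_iff[OF pp]) (use p in \<open>simp add: B_def\<close>)
        moreover have "\<not> p dvd (fact (k+1) :: nat)"
          by (subst prime_dvd_fact_iff[OF pp]) (use p in \<open>simp add: B_def\<close>)
        ultimately show "p dvd ((2*k+1) choose k)" using pp by (simp add: prime_dvd_mult_iff)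
      qed
      then have "\<Prod>B \<le> (2*k+1) choose k" by (rule dvd_imp_le) simp
      also have "\<dots> \<le> 4^k" by (rule binom_odd_le)
      finally have "\<Prod>B \<le> 4^k" .
      have "\<Prod>{p::nat. prime p \<and> p \<le> n} = \<Prod>A * \<Prod>B" unfolding eq
        by (rule prod.union_disjoint[OF finA finB disj])
      also have "\<dots> \<le> 4^(k+1) * 4^k" using \<open>\<Prod>A \<le> 4^(k+1)\<close> \<open>\<Prod>B \<le> 4^k\<close> by (rule mult_le_mono)
      also have "\<dots> = 4^n" using k by (simp add: power_add[symmetric])
      finally show ?thesis .
    qed
  qed
qed



lemma pow_gt_self: "prime (p::nat) \<Longrightarrow> n < p ^ n"
proof -
  assume "prime p"
  then have "2 \<le> p" by (rule prime_ge_2_nat)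
  have "n < 2 ^ n" by (rule less_exp)
  also have "\<dots> \<le> p ^ n" using \<open>2 \<le> p\<close> by (rule power_mono) simp
  finally show ?thesis .
qed

lemma legendre:
  fixes p :: nat
  assumes p: "prime p"
  shows "multiplicity p (fact n :: nat) = (\<Sum>i\<in>{1..n}. n div p^i)"
proof (induction n)
  case 0 then show ?case by simp
next
  case (Suc n)
  have pos: "p ^ i > 0" for i using p by (simp add: prime_gt_0_nat)
  have "multiplicity p (fact (Suc n) :: nat) = multiplicity p (Suc n * fact n)" by simp
  also have "\<dots> = multiplicity p (Suc n) + multiplicity p (fact n :: nat)"
    using p by (intro prime_elem_multiplicity_mult_distrib) auto
  finally have L: "multiplicity p (fact (Suc n) :: nat) = multiplicity p (Suc n) + (\<Sum>i\<in>{1..n}. n div p^i)"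
    using Suc by simp
  have "(\<Sum>i\<in>{1..Suc n}. Suc n div p^i) = (\<Sum>i\<in>{1..Suc n}. n div p^i + (if p^i dvd Suc n then 1 else 0))"
    by (intro sum.cong refl) (auto simp: div_Suc dvd_eq_mod_eq_0)
  also have "\<dots> = (\<Sum>i\<in>{1..Suc n}. n div p^i) + card {i\<in>{1..Suc n}. p^i dvd Suc n}"
  proof -
    have "(\<Sum>i\<in>{1..Suc n}. (if p^i dvd Suc n then 1 else 0::nat)) = card {i\<in>{1..Suc n}. p^i dvd Suc n}"
      by (subst sum.inter_filter[symmetric]) auto
    then show ?thesis by (simp only: sum.distrib)
  qed
  also have "(\<Sum>i\<in>{1..Suc n}. n div p^i) = (\<Sum>i\<in>{1..n}. n div p^i)"
  proof -
    have "n < p ^ Suc n" using pow_gt_self[OF p, of "Suc n"] by simp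
    then show ?thesis by (subst sum.cl_ivl_Suc) simp
  qed
  also have "{i\<in>{1..Suc n}. p^i dvd Suc n} = {1..multiplicity p (Suc n)}"
  proof -
    have "p ^ multiplicity p (Suc n) dvd Suc n" by (rule multiplicity_dvd)
    then have "p ^ multiplicity p (Suc n) \<le> Suc n" by (rule dvd_imp_le) simp
    then have "multiplicity p (Suc n) \<le> Suc n" using pow_gt_self[OF p, of "multiplicity p (Suc n)"] by simp
    moreover have D: "\<And>x. p^x dvd Suc n \<longleftrightarrow> x \<le> multiplicity p (Suc n)"
      by (rule power_dvd_iff_le_multiplicity) (use p in auto)
    ultimately show ?thesis
    proof (intro set_eqI)
      fix x
      show "x \<in> {i\<in>{1..Suc n}. p^i dvd Suc n} \<longleftrightarrow> x \<in> {1..multiplicity p (Suc n)}"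
        unfolding D using \<open>multiplicity p (Suc n) \<le> Suc n\<close> by auto
    qed
  qed
  finally have R: "(\<Sum>i\<in>{1..Suc n}. Suc n div p^i) = (\<Sum>i\<in>{1..n}. n div p^i) + card {1..multiplicity p (Suc n)}" .
  have C: "card {1..multiplicity p (Suc n)} = multiplicity p (Suc n)" by simp
  show ?case using L R C by linarith
qed



lemma div_double_le: "(2*m) div q \<le> 2 * (m div q) + (1::nat)"
proof (cases "q = 0")
  case True then show ?thesis by simp
next
  case False
  have "m = q * (m div q) + m mod q" by simp
  moreover have "m mod q < q" using False by simp
  moreover have "q * (2 * (m div q) + 2) = 2*(q*(m div q)) + 2*q" by (simp add: algebra_simps)
  ultimately have "2*m < q * (2 * (m div q) + 2)" by linarith
  then have "(2*m) div q < 2 * (m div q) + 2" using False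
    by (simp add: div_less_iff_less_mult mult.commute)
  then show ?thesis by simp
qed

lemma binom_mult_bound:
  fixes p m :: nat
  assumes p: "prime p" and m: "m \<ge> 1"
  shows "p ^ multiplicity p ((2*m) choose m) \<le> 2*m"
proof (rule ccontr)
  define v where "v = multiplicity p ((2*m) choose m)"
  assume "\<not> p ^ multiplicity p ((2*m) choose m) \<le> 2*m"
  then have big: "2*m < p ^ v" unfolding v_def by simp
  have v1: "v \<ge> 1" using big m by (cases v) auto
  have f: "fact (2*m) = fact m * fact m * ((2*m) choose m :: nat)"
    using binomial_fact_lemma[of m "2*m"] by (simp add: mult_ac)
  have nz: "((2*m) choose m) \<noteq> 0" by simp
  have "multiplicity p (fact (2*m) :: nat) = multiplicity p (fact m :: nat) + multiplicity p (fact m :: nat) + v"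
    unfolding f v_def using p nz by (simp add: prime_elem_multiplicity_mult_distrib)
  then have eq: "(\<Sum>i\<in>{1..2*m}. (2*m) div p^i) = 2 * (\<Sum>i\<in>{1..m}. m div p^i) + v"
    using legendre[OF p] by simp
  have ext: "(\<Sum>i\<in>{1..2*m}. m div p^i) = (\<Sum>i\<in>{1..m}. m div p^i)"
  proof (rule sum.mono_neutral_right)
    show "\<forall>i\<in>{1..2*m} - {1..m}. m div p ^ i = 0"
    proof
      fix i assume "i \<in> {1..2*m} - {1..m}"
      then have "m < i" by auto
      also have "i < p ^ i" by (rule pow_gt_self[OF p])
      finally show "m div p ^ i = 0" by simp
    qed
  qed auto
  have "(\<Sum>i\<in>{1..2*m}. (2*m) div p^i) \<le> (\<Sum>i\<in>{1..2*m}. 2 * (m div p^i) + (if i < v then 1 else 0))"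
  proof (rule sum_mono)
    fix i assume "i \<in> {1..2*m}"
    show "(2*m) div p^i \<le> 2 * (m div p^i) + (if i < v then 1 else 0)"
    proof (cases "i < v")
      case True then show ?thesis using div_double_le by simp
    next
      case False
      then have "p ^ v \<le> p ^ i" using p by (intro power_increasing) (auto simp: Suc_le_eq prime_gt_0_nat)
      then have "(2*m) div p^i = 0" using big by simp
      then show ?thesis by simp
    qed
  qed
  also have "\<dots> = 2 * (\<Sum>i\<in>{1..2*m}. m div p^i) + card {i\<in>{1..2*m}. i < v}"
  proof -
    have "(\<Sum>i\<in>{1..2*m}. (if i < v then 1 else 0::nat)) = card {i\<in>{1..2*m}. i < v}"
      by (subst sum.inter_filter[symmetric]) auto
    then show ?thesis by (simp only: sum.distrib sum_distrib_left)
  qed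
  also have "card {i\<in>{1..2*m}. i < v} \<le> card {1..<v}"
    by (rule card_mono) auto
  finally have "2 * (\<Sum>i\<in>{1..m}. m div p^i) + v \<le> 2 * (\<Sum>i\<in>{1..m}. m div p^i) + (v - 1)"
    using eq ext by simp
  then show False using v1 by simp
qed



lemma step6: "(s::nat) \<ge> 40 \<Longrightarrow> (s+2)^6 \<le> 2*(s+1)^6"
proof -
  assume s: "s \<ge> 40"
  have "40*(s+2) \<le> 41*(s+1)" using s by simp
  then have "(40*(s+2))^6 \<le> (41*(s+1))^6" by (rule power_mono) simp
  then have "40^6*(s+2)^6 \<le> 41^6*(s+1)^6" by (simp only: power_mult_distrib)
  also have "\<dots> \<le> (2*40^6)*(s+1)^6" by (rule mult_right_mono) simp_all
  finally have "40^6*(s+2)^6 \<le> 40^6*(2*(s+1)^6)" by (simp only: mult.assoc)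
  then show ?thesis by (subst (asm) mult_le_cancel1) simp
qed

lemma pow6_bound: "(s::nat) \<ge> 40 \<Longrightarrow> (s+1)^6 \<le> 2^(s-7)"
proof (induction s rule: nat_induct_at_least)
  case base then show ?case by simp
next
  case (Suc n)
  have "(Suc n + 1)^6 = (n+2)^6" by simp
  also have "\<dots> \<le> 2*(n+1)^6" using step6 Suc.hyps by simp
  also have "\<dots> \<le> 2 * 2^(n-7)" using Suc.IH by simp
  also have "\<dots> = 2^(Suc n - 7)"
  proof -
    have "Suc n - 7 = Suc (n - 7)" using Suc.hyps by simp
    then show ?thesis by simp
  qed
  finally show ?case .
qed

lemma main_ineq: "(s::nat) \<ge> 40 \<Longrightarrow> (s+1)^(6*(s+1)) < 2^(s^2-3)"
proof -
  assume s: "s \<ge> 40"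
  have "(s+1)^(6*(s+1)) = ((s+1)^6)^(s+1)" by (rule power_mult)
  also have "\<dots> \<le> (2^(s-7))^(s+1)" using pow6_bound[OF s] by (rule power_mono) simp
  also have "\<dots> = 2^((s-7)*(s+1))" by (rule power_mult[symmetric])
  also have "\<dots> < 2^(s^2-3)"
  proof (rule power_strict_increasing)
    define t where "t = s - 7"
    have t: "s = t + 7" using s unfolding t_def by simp
    show "(s-7)*(s+1) < s^2-3" unfolding t by (simp add: power2_eq_square algebra_simps)
  qed simp
  finally show ?thesis .
qed

lemma exists_sqrt: "\<exists>s::nat. s^2 \<le> N \<and> N < (s+1)^2"
proof (induction N)
  case 0 then show ?case by (intro exI[of _ 0]) simp
next
  case (Suc N)
  then obtain s where s: "s^2 \<le> N" "N < (s+1)^2" by blast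
  show ?case
  proof (cases "Suc N < (s+1)^2")
    case True then show ?thesis using s by (intro exI[of _ s]) simp
  next
    case False
    then have "Suc N = (s+1)^2" using s by simp
    moreover have "(s+1)^2 < (s+2)^2" by (simp add: power2_eq_square)
    ultimately show ?thesis by (intro exI[of _ "s+1"]) simp
  qed
qed



lemma weak_bertrand:
  fixes M :: nat
  assumes M1: "1 \<le> M"
  shows "\<exists>p. prime p \<and> M < p \<and> p \<le> 3 * M"
proof (cases "M < 947")
  case True then show ?thesis using small_cases M1 by blast
next
  case False
  show ?thesis
  proof (rule ccontr)
    assume H0: "\<not> ?thesis"
    have H: "\<And>p. prime p \<Longrightarrow> p \<le> 3*M \<Longrightarrow> p \<le> M"
      using H0 by (meson not_le)
    define m where "m = 3*M div 2"
    have m1: "2*m \<le> 3*M" "3*M \<le> 2*m+1" unfolding m_def by auto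
    have mpos: "m \<ge> 1" using m1 False by simp
    define C where "C = (2*m) choose m"
    have Cnz: "C \<noteq> 0" unfolding C_def by simp
    obtain s where s: "s^2 \<le> 2*m" "2*m < (s+1)^2" using exists_sqrt by blast
    have s40: "s \<ge> 40"
    proof (rule ccontr)
      assume "\<not> s \<ge> 40"
      then have "s + 1 \<le> 40" by simp
      then have "(s+1)^2 \<le> 40^2" by (rule power_mono) simp
      then show False using s(2) m1 False by simp
    qed
    define PF where "PF = prime_factors C"
    have finPF: "finite PF" unfolding PF_def by simp
    have PFprop: "prime p \<and> p dvd C" if "p \<in> PF" for p
      using that unfolding PF_def by (auto intro: in_prime_factors_imp_prime)
    have PFle: "p \<le> M" if "p \<in> PF" for p
    proof -
      have pp: "prime p" "p dvd C" using PFprop[OF that] by auto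
      have f: "fact (2*m) = fact m * fact m * ((2*m) choose m :: nat)"
        using binomial_fact_lemma[of m "2*m"] by (simp add: mult_ac)
      have "C dvd fact (2*m)" unfolding C_def f by simp
      then have "p dvd fact (2*m)" using pp(2) by (rule dvd_trans[rotated])
      then have "p \<le> 2*m" using prime_dvd_fact_iff[OF pp(1)] by simp
      then show ?thesis using H[OF pp(1)] m1 by simp
    qed
    define A where "A = {p\<in>PF. p \<le> s}"
    define B where "B = {p\<in>PF. s < p}"
    have finA: "finite A" "finite B" unfolding A_def B_def using finPF by auto
    have PFAB: "PF = A \<union> B" "A \<inter> B = {}" unfolding A_def B_def by auto
    have "C = (\<Prod>p\<in>PF. p ^ multiplicity p C)"
      using prod_prime_factors[OF Cnz] unfolding PF_def by simp
    also have "\<dots> = (\<Prod>p\<in>A. p ^ multiplicity p C) * (\<Prod>p\<in>B. p ^ multiplicity p C)"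
      unfolding PFAB(1) by (rule prod.union_disjoint[OF finA PFAB(2)])
    also have "(\<Prod>p\<in>A. p ^ multiplicity p C) \<le> (2*m)^s"
    proof -
      have "(\<Prod>p\<in>A. p ^ multiplicity p C) \<le> (\<Prod>p\<in>A. 2*m)"
      proof (rule prod_mono)
        fix p assume "p \<in> A"
        then have "prime p" using PFprop unfolding A_def by auto
        then show "0 \<le> p ^ multiplicity p C \<and> p ^ multiplicity p C \<le> 2*m"
          unfolding C_def using binom_mult_bound[OF _ mpos] by simp
      qed
      also have "\<dots> = (2*m)^card A" by simp
      also have "\<dots> \<le> (2*m)^s"
      proof (rule power_increasing)
        have "A \<subseteq> {1..s}" unfolding A_def using PFprop
          by (auto simp: Suc_le_eq prime_gt_0_nat)
        then have "card A \<le> card {1..s}" by (rule card_mono[rotated]) simp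
        then show "card A \<le> s" by simp
      qed (use mpos in simp)
      finally show ?thesis .
    qed
    also have "(\<Prod>p\<in>B. p ^ multiplicity p C) = \<Prod>B"
    proof (rule prod.cong[OF refl])
      fix p assume pB: "p \<in> B"
      then have pp: "prime p" "p dvd C" "s < p" using PFprop unfolding B_def by auto
      have "multiplicity p C > 0" using pp Cnz by (simp add: prime_multiplicity_gt_zero_iff)
      moreover have "multiplicity p C < 2"
      proof (rule ccontr)
        assume "\<not> multiplicity p C < 2"
        then have "p^2 \<le> p ^ multiplicity p C" using pp(1)
          by (intro power_increasing) (auto simp: Suc_le_eq prime_gt_0_nat)
        also have "\<dots> \<le> 2*m" unfolding C_def using binom_mult_bound[OF pp(1) mpos] .
        also have "\<dots> < (s+1)^2" by (rule s(2))
        also have "\<dots> \<le> p^2" using pp(3) by (intro power_mono) simp_all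
        finally show False by simp
      qed
      ultimately have "multiplicity p C = 1" by simp
      then show "p ^ multiplicity p C = p" by simp
    qed
    also have "\<Prod>B \<le> 4^M"
    proof -
      have "B \<subseteq> {p. prime p \<and> p \<le> M}" unfolding B_def using PFprop PFle by auto
      then have "\<Prod>B dvd \<Prod>{p::nat. prime p \<and> p \<le> M}" by (intro prod_dvd_prod_subset) simp_all
      then have "\<Prod>B \<le> \<Prod>{p::nat. prime p \<and> p \<le> M}"
        by (rule dvd_imp_le) (auto simp: prime_gt_0_nat)
      also have "\<dots> \<le> 4^M" by (rule primorial_le)
      finally show ?thesis .
    qed
    finally have Cup: "C \<le> (2*m)^s * 4^M" by simp
    have "4^m / (2 * real m) \<le> real C" unfolding C_def using central_binomial_lower_bound mpos by simp
    then have "4^m \<le> 2 * real m * real C" using mpos by (simp add: field_simps)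
    then have "real ((4::nat)^m) \<le> real (2*m*C)" by simp
    then have "(4::nat)^m \<le> 2*m*C" by (simp only: of_nat_le_iff)
    also have "\<dots> \<le> 2*m * ((2*m)^s * 4^M)" using Cup by simp
    also have "\<dots> = (2*m)^(s+1) * 4^M" by simp
    finally have I1: "4^m \<le> (2*m)^(s+1) * (4::nat)^M" .
    have "2^(M-1) * 4^M = (2::nat)^(3*M - 1)"
    proof -
      have "3*M-1 = (M-1) + 2*M" using M1 by simp
      then show ?thesis by (simp add: power_add power_mult)
    qed
    also have "\<dots> \<le> 2^(2*m)" by (rule power_increasing) (use m1 in simp_all)
    also have "\<dots> = 4^m" by (simp add: power_mult)
    finally have "2^(M-1) * 4^M \<le> (2*m)^(s+1) * (4::nat)^M" using I1 by (rule le_trans)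
    then have I2: "2^(M-1) \<le> (2*m)^(s+1)" by (subst (asm) mult_le_cancel2) simp
    also have "\<dots> \<le> ((s+1)^2)^(s+1)" using s(2) by (intro power_mono) simp_all
    also have "\<dots> = (s+1)^(2*(s+1))" by (rule power_mult[symmetric])
    finally have I3: "(2::nat)^(M-1) \<le> (s+1)^(2*(s+1))" .
    have "(2::nat)^(3*(M-1)) = (2^(M-1))^3" by (metis power_mult mult.commute)
    also have "\<dots> \<le> ((s+1)^(2*(s+1)))^3" using I3 by (rule power_mono) simp
    also have "\<dots> = (s+1)^(6*(s+1))" by (metis power_mult mult.commute mult.assoc num_double numeral_times_numeral)
    also have "\<dots> < 2^(s^2-3)" by (rule main_ineq[OF s40])
    also have "\<dots> \<le> 2^(3*(M-1))" by (rule power_increasing) (use s m1 in simp_all)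
    finally show False by simp
  qed
qed



lemma odd_prime_exists:
  fixes x :: nat
  assumes "x \<ge> 5" "odd x"
  shows "\<exists>p. prime p \<and> odd p \<and> p \<le> x \<and> x < 3*p"
proof -
  have "1 \<le> x div 3" using assms by simp
  then obtain p where p: "prime p" "x div 3 < p" "p \<le> 3 * (x div 3)"
    using weak_bertrand[of "x div 3"] by blast
  have px: "p \<le> x" "x < 3*p" using p by linarith+
  show ?thesis
  proof (cases "p = 2")
    case True
    then have "x = 5" using p assms by presburger
    then show ?thesis by (intro exI[of _ 3]) auto
  next
    case False
    then have "odd p" using p(1) prime_odd_nat[of p] prime_gt_1_nat[of p] by simp
    then show ?thesis using p px by blast
  qed
qed

lemma coprime_odd_plus2: "odd (a::nat) \<Longrightarrow> coprime a (a + 2)"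
proof -
  assume "odd a"
  then have "coprime a 2" by simp
  then have "gcd a 2 = 1" by (simp only: coprime_iff_gcd_eq_1)
  moreover have "gcd a (a+2) = gcd a 2" by (rule gcd_add2)
  ultimately show ?thesis by (simp only: coprime_iff_gcd_eq_1)
qed

lemma coprime_odd_plus4: "odd (a::nat) \<Longrightarrow> coprime a (a + 4)"
proof -
  assume "odd a"
  then have "coprime a 2" by simp
  then have "coprime a (2*2)" by (simp only: coprime_mult_right_iff)
  then have "gcd a 4 = 1" by (simp only: coprime_iff_gcd_eq_1) simp
  moreover have "gcd a (a+4) = gcd a 4" by (rule gcd_add2)
  ultimately show ?thesis by (simp only: coprime_iff_gcd_eq_1)
qed

lemma lin_inj:
  fixes m a b a' b' :: nat
  assumes "b < m" "b' < m" "a*m + b = a'*m + b'"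
  shows "a = a' \<and> b = b'"
proof -
  have h1: "a = (a*m+b) div m" "b = (a*m+b) mod m" using assms(1) by auto
  have h2: "a' = (a'*m+b') div m" "b' = (a'*m+b') mod m" using assms(2) by auto
  show ?thesis using h1 h2 assms(3) by (metis)
qed



lemma card_odd_le: "card {q::nat. odd q \<and> q \<le> 2 * N - 1} = N"
proof -
  have "{q::nat. odd q \<and> q \<le> 2 * N - 1} = (\<lambda>t. 2*t+1) ` {..<N}"
  proof (intro set_eqI iffI)
    fix q assume "q \<in> {q::nat. odd q \<and> q \<le> 2 * N - 1}"
    then have q: "odd q" "q \<le> 2*N - 1" by auto
    then obtain t where t: "q = 2*t+1" by (metis oddE)
    then have "t < N" using q by simp
    then show "q \<in> (\<lambda>t. 2*t+1) ` {..<N}" using t by auto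
  qed auto
  moreover have "inj_on (\<lambda>t::nat. 2*t+1) {..<N}" by (auto simp: inj_on_def)
  ultimately show ?thesis by (simp add: card_image)
qed

lemma book_vertices_eq:
  "book_vertices n k = {BU, BV} \<union> (\<lambda>(i,j). BW i j) ` ({1..n} \<times> {1..k-2})"
  unfolding book_vertices_def by auto

lemma card_book: "card (book_vertices n k) = n * (k-2) + 2"
proof -
  have inj: "inj_on (\<lambda>(i,j). BW i j) ({1..n} \<times> {1..k-2})" by (auto simp: inj_on_def)
  have "card ((\<lambda>(i,j). BW i j) ` ({1..n} \<times> {1..k-2})) = n * (k-2)"
    using card_image[OF inj] by (simp add: card_cartesian_product)
  moreover have "{BU, BV} \<inter> (\<lambda>(i,j). BW i j) ` ({1..n} \<times> {1..k-2}) = {}" by auto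
  ultimately show ?thesis unfolding book_vertices_eq
    by (subst card_Un_disjoint) auto
qed



theorem theorem3p4:
  fixes n k :: nat
  assumes "n \<ge> 1" and "k \<ge> 3"
  shows "odd_prime_graph (book_vertices n k) (book_edges n k)"
proof -
  define m where "m = k - 2"
  have m1: "m \<ge> 1" using assms(2) unfolding m_def by simp
  define x where "x = 2*n*m + 3"
  have nm1: "1 \<le> n*m" using assms(1) m1 by simp
  have x5: "x \<ge> 5" "odd x" unfolding x_def using nm1 by auto
  obtain p where p: "prime p" "odd p" "p \<le> x" "x < 3*p" using odd_prime_exists[OF x5] by blast
  define f where "f t = (if 2*t+1 < p then 2*t+1 else 2*t+3)" for t :: nat
  define l where "l v = (case v of BU \<Rightarrow> 1 | BV \<Rightarrow> p | BW i j \<Rightarrow> f ((i-1)*m + j))" for v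
  define V where "V = book_vertices n k"
  define L where "L = {q::nat. odd q \<and> q \<le> 2 * card V - 1}"
  have cardV: "card V = n*m + 2" unfolding V_def m_def by (rule card_book)
  have Lx: "2 * card V - 1 = x" unfolding cardV x_def by simp
  have p3: "p \<ge> 3" using p prime_ge_2_nat[of p] by (cases "p = 2") auto
  have f_odd: "odd (f t)" for t unfolding f_def by simp
  have f_ge: "f t \<ge> 3" if "t \<ge> 1" for t using that unfolding f_def by auto
  have f_ne: "f t \<noteq> p" for t unfolding f_def by auto
  have f_mono: "f t < f t'" if "t < t'" for t t' using that unfolding f_def by auto
  have f_le: "f t \<le> x" if "t \<le> n*m" for t
  proof -
    have "2*t+3 \<le> x" using that unfolding x_def by simp
    then show ?thesis unfolding f_def by auto
  qed
  have f_step: "f (t+1) = f t + 2 \<or> f (t+1) = f t + 4" for t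
    unfolding f_def using p(2) by auto presburger?
  have memV: "v \<in> V \<longleftrightarrow> v = BU \<or> v = BV \<or> (\<exists>i j. v = BW i j \<and> 1 \<le> i \<and> i \<le> n \<and> 1 \<le> j \<and> j \<le> m)" for v
    unfolding V_def book_vertices_def m_def by auto
  have tbound: "1 \<le> (i-1)*m + j \<and> (i-1)*m + j \<le> n*m" if "1 \<le> i" "i \<le> n" "1 \<le> j" "j \<le> m" for i j
  proof -
    have "(i-1)*m + j \<le> (i-1)*m + m" using that by simp
    also have "\<dots> = i*m" using that by (cases i) auto
    also have "\<dots> \<le> n*m" using that by simp
    finally show ?thesis using that by simp
  qed
  have lU: "l BU = 1" and lV: "l BV = p" and lW: "l (BW i j) = f ((i-1)*m + j)" for i j
    unfolding l_def by simp_all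
  have Wprops: "l (BW i j) \<ge> 3 \<and> l (BW i j) \<noteq> p" if "BW i j \<in> V" for i j
  proof -
    have ij: "1 \<le> i" "i \<le> n" "1 \<le> j" "j \<le> m" using that memV[of "BW i j"] by auto
    show ?thesis unfolding lW using f_ge tbound[OF ij] f_ne by blast
  qed
  have inj: "inj_on l V"
  proof (rule inj_onI)
    fix a b assume a: "a \<in> V" and b: "b \<in> V" and eq: "l a = l b"
    show "a = b"
    proof (cases a)
      case aU: BU
      show ?thesis
      proof (cases b)
        case BU then show ?thesis using aU by simp
      next
        case BV then show ?thesis using aU eq lU lV p3 by simp
      next
        case (BW i j) then show ?thesis using aU eq lU Wprops[of i j] b by simp
      qed
    next
      case aV: BV
      show ?thesis
      proof (cases b)
        case BU then show ?thesis using aV eq lU lV p3 by simp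
      next
        case BV then show ?thesis using aV by simp
      next
        case (BW i j) then show ?thesis using aV eq lV Wprops[of i j] b by simp
      qed
    next
      case aW: (BW i j)
      then have ij: "1 \<le> i" "i \<le> n" "1 \<le> j" "j \<le> m" using a memV[of a] by auto
      show ?thesis
      proof (cases b)
        case BU then show ?thesis using aW eq lU Wprops[of i j] a by simp
      next
        case BV then show ?thesis using aW eq lV Wprops[of i j] a by simp
      next
        case (BW i' j')
        then have ij': "1 \<le> i'" "i' \<le> n" "1 \<le> j'" "j' \<le> m" using b memV[of b] by auto
        have feq: "f ((i-1)*m + j) = f ((i'-1)*m + j')" using eq aW BW lW by simp
        have "(i-1)*m + j = (i'-1)*m + j'"
        proof (rule ccontr)
          assume ne: "(i-1)*m + j \<noteq> (i'-1)*m + j'"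
          then consider "(i-1)*m + j < (i'-1)*m + j'" | "(i'-1)*m + j' < (i-1)*m + j" by linarith
          then show False using f_mono feq by cases force+
        qed
        then have "(i-1)*m + (j-1) = (i'-1)*m + (j'-1)" using ij ij' by simp
        then have "i-1 = i'-1 \<and> j-1 = j'-1" using ij ij' by (intro lin_inj) auto
        then have "i = i' \<and> j = j'" using ij ij' by linarith
        then show ?thesis using BW aW by simp
      qed
    qed
  qed
  have sub: "l ` V \<subseteq> L"
  proof
    fix q assume "q \<in> l ` V"
    then obtain v where v: "v \<in> V" "q = l v" by blast
    have Leq: "L = {q. odd q \<and> q \<le> x}" unfolding L_def Lx by simp
    show "q \<in> L"
    proof (cases v)
      case BU then show ?thesis using v x5 unfolding l_def Leq by simp
    next
      case BV then show ?thesis using v p unfolding l_def Leq by simp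
    next
      case (BW i j)
      then have ij: "1 \<le> i" "i \<le> n" "1 \<le> j" "j \<le> m" using v memV[of v] by auto
      then show ?thesis using v BW f_odd f_le tbound[OF ij] unfolding l_def Leq by simp
    qed
  qed
  have finL: "finite L" unfolding L_def by simp
  have "card (l ` V) = card L"
  proof -
    have "card L = card V" unfolding L_def by (rule card_odd_le)
    then show ?thesis using card_image[OF inj] by simp
  qed
  then have "l ` V = L" using card_subset_eq[OF finL sub] by simp
  then have bij: "bij_betw l V L" using inj by (simp add: bij_betw_def)
  have edge: "coprime (l a) (l b)" if "{a, b} \<in> book_edges n k" for a b
  proof -
    have cop_sym: "coprime (l a) (l b)" if "coprime (l b) (l a)" using that by (simp add: coprime_commute)
    have vadj: "coprime (f t) p" if "t \<le> n*m" for t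
    proof -
      have "\<not> p dvd f t"
      proof
        assume "p dvd f t"
        then obtain c where c: "f t = p * c" by auto
        have "odd c" using c f_odd[of t] by auto
        moreover have "c \<noteq> 1" using c f_ne[of t] by auto
        ultimately have "c \<ge> 3" by presburger
        then have "p * 3 \<le> f t" using c by simp
        then show False using f_le[OF that] p(4) by simp
      qed
      then show ?thesis using p(1) by (simp add: prime_imp_coprime coprime_commute)
    qed
    from that consider
      "{a,b} = {BU, BV}"
      | i where "{a,b} = {BU, BW i 1}" "1 \<le> i" "i \<le> n"
      | i j where "{a,b} = {BW i j, BW i (j+1)}" "1 \<le> i" "i \<le> n" "1 \<le> j" "j \<le> m - 1"
      | i where "{a,b} = {BW i m, BV}" "1 \<le> i" "i \<le> n"
      unfolding book_edges_def m_def by (auto simp: numeral_3_eq_3)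
    then show ?thesis
    proof cases
      case 1 then show ?thesis unfolding l_def by (auto simp: doubleton_eq_iff)
    next
      case 2 then show ?thesis unfolding l_def by (auto simp: doubleton_eq_iff)
    next
      case (3 i j)
      define t where "t = (i-1)*m + j"
      have lt: "l (BW i j) = f t" "l (BW i (j+1)) = f (t+1)" unfolding l_def t_def by simp_all
      have "coprime (f t) (f (t+1))"
        using f_step[of t] coprime_odd_plus2[OF f_odd[of t]] coprime_odd_plus4[OF f_odd[of t]] by auto
      then show ?thesis using 3(1) lt by (auto simp: doubleton_eq_iff coprime_commute)
    next
      case (4 i)
      have "(i-1)*m + m \<le> n*m" using tbound[OF 4(2,3) m1 order_refl] by simp
      then have "coprime (f ((i-1)*m + m)) p" by (rule vadj)
      then show ?thesis using 4(1) unfolding l_def by (auto simp: doubleton_eq_iff coprime_commute)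
    qed
  qed
  show ?thesis unfolding odd_prime_graph_def
    using bij edge unfolding V_def L_def by blast
qed

end
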